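(* Let $N\ge1$, $K\ge1$, $T\ge1$, $L>0$, $\sigma_l^2\ge0$, $\sigma_g^2>0$, $C>0$, $\Delta_0=f(W_0)-f^*\ge0$, and truncation errors $\hat r_1,\dots,\hat r_N\ge0$ be fixed, let $D_0=4\big(1+\frac{1}{K^2T}\big)$, and for $p=(p_1,\dots,p_N)\in\mathbb{R}^N$ define $$\Phi(p)=\frac{1}{C}\Bigg[\frac{L\Delta_0}{\sqrt{T}}+\frac{L(L+1)}{2}\Bigg(\frac{3ND_0^K}{\sqrt T}\sum_{i=1}^N p_i^2\hat r_i^2+\frac{24N\sigma_l^2(D_0^K-1)}{L^2K^2T^{3/2}(D_0-1)}\sum_{i=1}^N p_i^2+\frac{6N\sigma_l^2}{L^2\sqrt T}\sum_{i=1}^N p_i^2\Bigg)+\frac{3N(\sigma_l^2+6K\sigma_g^2)}{2KT}\sum_{i=1}^N p_i^2+\frac{N\sigma_l^2}{2\sqrt T}\sum_{i=1}^N p_i^2\Bigg].$$ Then there is a constant $\epsilon>0$, depending only on $N,K,T,L,\sigma_l^2,\sigma_g^2$ (and not on $p$ or the $\hat r_i$), such that the minimizer of $\Phi$ over $\{p\in\mathbb{R}^N:\sum_{i=1}^N p_i=1\}$ is $$p_i^*=\frac{1/(\hat r_i^2+\epsilon)}{\sum_{j=1}^N 1/(\hat r_j^2+\epsilon)},\qquad i=1,\dots,N.$$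
   Context: $\Phi(p)$ is the right-hand side of the FedHL convergence bound $\frac1T\sum_{t=0}^{T-1}\mathbb{E}\|\nabla f(W_t)\|^2\le\Phi(p)$ for heterogeneous-LoRA federated learning with $N$ clients, aggregation weights $p_i$, $K$ local SGD steps, $T$ rounds, learning rate $\eta_t=\frac{1}{LK\sqrt T}$ (so $D_0=4(1+L^2\eta_t^2)$), smoothness constant $L$, local gradient variance bound $\sigma_l^2$, gradient heterogeneity bound $\sigma_g^2$, and $\hat r_i$ bounding the rank-$r_i$ SVD truncation error of client $i$ via $\mathbb{E}\|W_t-[W_t]_{r_i}\|_F^2\le\hat r_i^2$. In the minimization, $C$, $\Delta_0$ and the $\hat r_i$ are held fixed. *)

theory Defs
  imports Complex_Main
begin

definition fedhl_D0 :: "nat \<Rightarrow> nat \<Rightarrow> real" where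
  "fedhl_D0 K T = 4 * (1 + 1 / (real K ^ 2 * real T))"

text \<open>FedHL convergence bound Phi(p); clients indexed by 1..N; sl2 = sigma_l^2, sg2 = sigma_g^2,
  rhat i = hat r_i.\<close>
definition fedhl_Phi ::
  "nat \<Rightarrow> nat \<Rightarrow> nat \<Rightarrow> real \<Rightarrow> real \<Rightarrow> real \<Rightarrow> real \<Rightarrow> real \<Rightarrow> (nat \<Rightarrow> real) \<Rightarrow> (nat \<Rightarrow> real) \<Rightarrow> real" where
  "fedhl_Phi N K T L sl2 sg2 C Delta0 rhat p =
    (let D0 = fedhl_D0 K T; n = real N; k = real K; t = real T;
         S2 = (\<Sum>i=1..N. (p i)^2);
         SR = (\<Sum>i=1..N. (p i)^2 * (rhat i)^2)
     in (1 / C) *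
       ( L * Delta0 / sqrt t
       + L * (L + 1) / 2 *
           ( 3 * n * D0 ^ K / sqrt t * SR
           + 24 * n * sl2 * (D0 ^ K - 1) / (L^2 * k^2 * t powr (3/2) * (D0 - 1)) * S2
           + 6 * n * sl2 / (L^2 * sqrt t) * S2)
       + 3 * n * (sl2 + 6 * k * sg2) / (2 * k * t) * S2
       + n * sl2 / (2 * sqrt t) * S2))"

end

theory Submission
  imports Defs
begin

lemma quad_decomp:
  fixes w p :: "nat \<Rightarrow> real"
  assumes N: "N \<ge> 1" and w: "\<forall>i\<in>{1..N}. w i > 0" and p: "(\<Sum>i=1..N. p i) = 1"
  defines "S \<equiv> (\<Sum>j=1..N. 1 / w j)"
  defines "q \<equiv> (\<lambda>i. (1 / w i) / S)"
  shows "(\<Sum>i=1..N. q i) = 1"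
    and "(\<Sum>i=1..N. w i * (p i)^2) = (\<Sum>i=1..N. w i * (q i)^2) + (\<Sum>i=1..N. w i * (p i - q i)^2)"
proof -
  have Spos: "S > 0" unfolding S_def
    by (rule sum_pos) (use N w in auto)
  show q1: "(\<Sum>i=1..N. q i) = 1" unfolding q_def
  proof -
    have "(\<Sum>i=1..N. (1 / w i) / S) = (\<Sum>i=1..N. 1 / w i) / S"
      by (rule sum_divide_distrib[symmetric])
    then show "(\<Sum>i=1..N. (1 / w i) / S) = 1" using Spos by (simp add: S_def)
  qed
  have wq: "\<And>i. i \<in> {1..N} \<Longrightarrow> w i * q i = 1 / S"
    unfolding q_def using w by (simp add: less_imp_neq[symmetric])
  have e: "\<And>i. i \<in> {1..N} \<Longrightarrow> w i * (p i)^2 = w i * (q i)^2 + w i * (p i - q i)^2 + 2 * (w i * q i) * (p i - q i)"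
    by (simp add: power2_eq_square algebra_simps)
  have "(\<Sum>i=1..N. w i * (p i)^2) = (\<Sum>i=1..N. w i * (q i)^2 + w i * (p i - q i)^2 + 2 * (1/S) * (p i - q i))"
    using e wq by (intro sum.cong) auto
  also have "\<dots> = (\<Sum>i=1..N. w i * (q i)^2) + (\<Sum>i=1..N. w i * (p i - q i)^2) + 2 * (1/S) * ((\<Sum>i=1..N. p i) - (\<Sum>i=1..N. q i))"
    by (simp only: sum.distrib sum_distrib_left[symmetric] sum_subtractf)
  also have "\<dots> = (\<Sum>i=1..N. w i * (q i)^2) + (\<Sum>i=1..N. w i * (p i - q i)^2)"
    using p q1 by simp
  finally show "(\<Sum>i=1..N. w i * (p i)^2) = (\<Sum>i=1..N. w i * (q i)^2) + (\<Sum>i=1..N. w i * (p i - q i)^2)" .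
qed

theorem theorem3:
  fixes N K T :: nat and L sl2 sg2 :: real
  assumes "N \<ge> 1" and "K \<ge> 1" and "T \<ge> 1" and "L > 0" and "sl2 \<ge> 0" and "sg2 > 0"
  shows "\<exists>eps > 0. \<forall>(C::real) (Delta0::real) (rhat::nat \<Rightarrow> real).
           C > 0 \<longrightarrow> Delta0 \<ge> 0 \<longrightarrow> (\<forall>i\<in>{1..N}. rhat i \<ge> 0) \<longrightarrow>
           (let pstar = (\<lambda>i. (1 / ((rhat i)^2 + eps)) / (\<Sum>j=1..N. 1 / ((rhat j)^2 + eps)))
            in (\<Sum>i=1..N. pstar i) = 1 \<and>
               (\<forall>p::nat \<Rightarrow> real. (\<Sum>i=1..N. p i) = 1 \<longrightarrow>
                  fedhl_Phi N K T L sl2 sg2 C Delta0 rhat pstar \<le> fedhl_Phi N K T L sl2 sg2 C Delta0 rhat p) \<and>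
               (\<forall>p::nat \<Rightarrow> real. (\<Sum>i=1..N. p i) = 1 \<longrightarrow>
                  fedhl_Phi N K T L sl2 sg2 C Delta0 rhat p \<le> fedhl_Phi N K T L sl2 sg2 C Delta0 rhat pstar \<longrightarrow>
                  (\<forall>i\<in>{1..N}. p i = pstar i)))"
proof -
  define D0 where "D0 = fedhl_D0 K T"
  define n where "n = real N"
  define k where "k = real K"
  define t where "t = real T"
  define A where "A = L * (L + 1) / 2 * (3 * n * D0 ^ K / sqrt t)"
  define B where "B = L * (L + 1) / 2 *
           (24 * n * sl2 * (D0 ^ K - 1) / (L^2 * k^2 * t powr (3/2) * (D0 - 1))
           + 6 * n * sl2 / (L^2 * sqrt t))
       + 3 * n * (sl2 + 6 * k * sg2) / (2 * k * t)
       + n * sl2 / (2 * sqrt t)"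
  have npos: "n > 0" and kpos: "k > 0" and tpos: "t > 0" using assms by (auto simp: n_def k_def t_def)
  have D0gt: "D0 > 1" unfolding D0_def fedhl_D0_def using assms
    by (simp add: k_def t_def add_pos_nonneg)
  have D0K: "D0 ^ K \<ge> 1" using D0gt by simp
  have Apos: "A > 0" unfolding A_def using assms npos tpos D0gt by (simp add: zero_less_mult_iff)
  have b1: "24 * n * sl2 * (D0 ^ K - 1) / (L^2 * k^2 * t powr (3/2) * (D0 - 1)) \<ge> 0"
    using npos kpos tpos D0gt D0K assms by simp
  have b2: "6 * n * sl2 / (L^2 * sqrt t) \<ge> 0" using npos tpos assms by simp
  have b3: "3 * n * (sl2 + 6 * k * sg2) / (2 * k * t) > 0" using npos tpos kpos assms
    by (simp add: zero_less_mult_iff add_nonneg_pos)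
  have b4: "n * sl2 / (2 * sqrt t) \<ge> 0" using npos tpos assms by simp
  have Bpos: "B > 0" unfolding B_def using b1 b2 b3 b4 assms
    by (smt (verit) mult_nonneg_nonneg divide_nonneg_nonneg)
  define eps where "eps = B / A"
  have epspos: "eps > 0" using Apos Bpos by (simp add: eps_def)
  show ?thesis
  proof (rule exI[of _ eps], intro conjI allI impI epspos)
    fix C Delta0 :: real and rhat :: "nat \<Rightarrow> real"
    assume C: "C > 0" and D: "Delta0 \<ge> 0" and r: "\<forall>i\<in>{1..N}. rhat i \<ge> 0"
    define w where "w = (\<lambda>i. (rhat i)^2 + eps)"
    have w: "\<forall>i\<in>{1..N}. w i > 0" using epspos by (simp add: w_def add_nonneg_pos)
    have Phi: "fedhl_Phi N K T L sl2 sg2 C Delta0 rhat p =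
       (1/C) * (L * Delta0 / sqrt t + A * (\<Sum>i=1..N. w i * (p i)^2))" for p
    proof -
      have "A * (\<Sum>i=1..N. w i * (p i)^2) = A * (\<Sum>i=1..N. (p i)^2 * (rhat i)^2) + B * (\<Sum>i=1..N. (p i)^2)"
        using Apos by (simp add: w_def eps_def sum_distrib_left sum.distrib[symmetric] algebra_simps)
      then show ?thesis
        unfolding fedhl_Phi_def Let_def
        by (simp add: A_def B_def D0_def n_def k_def t_def algebra_simps)
    qed
    define q where "q = (\<lambda>i. (1 / w i) / (\<Sum>j=1..N. 1 / w j))"
    have mono: "fedhl_Phi N K T L sl2 sg2 C Delta0 rhat p \<le> fedhl_Phi N K T L sl2 sg2 C Delta0 rhat p'
       \<longleftrightarrow> (\<Sum>i=1..N. w i * (p i)^2) \<le> (\<Sum>i=1..N. w i * (p' i)^2)" for p p'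
      unfolding Phi using C Apos by (simp add: divide_le_cancel mult_le_cancel_left_pos)
    have q1: "(\<Sum>i=1..N. q i) = 1"
    proof -
      have Sp: "(\<Sum>j=1..N. 1 / w j) > 0" by (rule sum_pos) (use assms(1) w in auto)
      have "(\<Sum>i=1..N. (1 / w i) / (\<Sum>j=1..N. 1 / w j)) = (\<Sum>i=1..N. 1 / w i) / (\<Sum>j=1..N. 1 / w j)"
        by (rule sum_divide_distrib[symmetric])
      then show ?thesis using Sp unfolding q_def by simp
    qed
    have dec: "(\<Sum>i=1..N. p i) = 1 \<Longrightarrow> (\<Sum>i=1..N. w i * (p i)^2) = (\<Sum>i=1..N. w i * (q i)^2) + (\<Sum>i=1..N. w i * (p i - q i)^2)" for p
      using quad_decomp(2)[OF assms(1) w] unfolding q_def by blast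
    have nn: "(\<Sum>i=1..N. w i * (p i - q i)^2) \<ge> 0" for p
      using w by (intro sum_nonneg) (simp add: less_imp_le)
    have qeq: "(\<lambda>i. (1 / ((rhat i)^2 + eps)) / (\<Sum>j=1..N. 1 / ((rhat j)^2 + eps))) = q"
      unfolding q_def w_def ..
    show "let pstar = (\<lambda>i. (1 / ((rhat i)^2 + eps)) / (\<Sum>j=1..N. 1 / ((rhat j)^2 + eps)))
            in (\<Sum>i=1..N. pstar i) = 1 \<and>
               (\<forall>p::nat \<Rightarrow> real. (\<Sum>i=1..N. p i) = 1 \<longrightarrow>
                  fedhl_Phi N K T L sl2 sg2 C Delta0 rhat pstar \<le> fedhl_Phi N K T L sl2 sg2 C Delta0 rhat p) \<and>
               (\<forall>p::nat \<Rightarrow> real. (\<Sum>i=1..N. p i) = 1 \<longrightarrow>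
                  fedhl_Phi N K T L sl2 sg2 C Delta0 rhat p \<le> fedhl_Phi N K T L sl2 sg2 C Delta0 rhat pstar \<longrightarrow>
                  (\<forall>i\<in>{1..N}. p i = pstar i))"
      unfolding Let_def qeq
    proof (intro conjI allI impI ballI q1)
      fix p :: "nat \<Rightarrow> real" assume "(\<Sum>i=1..N. p i) = 1"
      then show "fedhl_Phi N K T L sl2 sg2 C Delta0 rhat q \<le> fedhl_Phi N K T L sl2 sg2 C Delta0 rhat p"
      proof -
        assume p: "(\<Sum>i=1..N. p i) = 1"
        show ?thesis unfolding mono using dec[OF p] nn[of p] by linarith
      qed
    next
      fix p :: "nat \<Rightarrow> real" and i assume p: "(\<Sum>i=1..N. p i) = 1"
        and le: "fedhl_Phi N K T L sl2 sg2 C Delta0 rhat p \<le> fedhl_Phi N K T L sl2 sg2 C Delta0 rhat q"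
        and i: "i \<in> {1..N}"
      have "(\<Sum>i=1..N. w i * (p i - q i)^2) = 0"
        using le[unfolded mono] dec[OF p] nn[of p] by linarith
      then have "\<forall>i\<in>{1..N}. w i * (p i - q i)^2 = 0"
        using w by (subst (asm) sum_nonneg_eq_0_iff) (auto simp: less_imp_le)
      then have "w i * (p i - q i)^2 = 0" "w i > 0" using w i by auto
      then show "p i = q i" by simp
    qed
  qed
qed

end
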